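(* Fix simple objects $j,k$ of $\mathcal{C}$. For each simple $i$ with $(i,j,k)$ admissible and each admissible $(a,i,b)$, put $$u^{ab}_i=\sum_pF^{ajk}_{b;ip}\;v^{ap}_j\otimes v^{pb}_k\ \in V_j\otimes V_k .$$ Then the subspace of $V_j\otimes V_k$ spanned by the $u^{ab}_i$ (for fixed $i$) is an $H_\mathcal{C}$-submodule isomorphic to $V_i$ via $v^{ab}_i\mapsto u^{ab}_i$, and $$V_j\otimes V_k\cong\bigoplus_{i:\,(i,j,k)\text{ admissible}}V_i .$$
   Context: $\mathcal{C}$ is a unitary fusion category, multiplicity free, whose simple objects are self-dual with trivial Frobenius–Schur indicators; $d_a$ quantum dimensions; $(a,b,c)$ admissible iff $\mathrm{Hom}(a\otimes b,c)\ne0$. Trivalent vertices are normalized so $\theta(a,b,c)=\sqrt{d_ad_bd_c}$; $F^{abc}_{d;nm}$ are the (unitary) $F$-symbols: the basis vector of $\mathrm{Hom}((a\otimes b)\otimes c,d)$ with intermediate $m$ equals $\sum_nF^{abc}_{d;nm}$ times that of $\mathrm{Hom}(a\otimes(b\otimes c),d)$ with intermediate $n$. $H_\mathcal{C}$ has basis $e^{ab}_{i;cd}$ ($(a,i,b)$, $(i,d,c)$ admissible), multiplication $e^{ab}_{i;cd}e^{a'b'}_{i';c'd'}=\frac{\delta_{c,a'}\delta_{d,b'}\delta_{i,i'}}{\sqrt{d_i}}e^{ab}_{i;c'd'}$, unit $\eta=\sum_{a,b,i}\sqrt{d_i}e^{ab}_{i;ab}$ and comultiplication $\Delta(e^{ab}_{i;cd})=\sum_{j,k,p,q}\frac{\sqrt{d_jd_k}}{\sqrt{d_i}}F^{ajk}_{b;ip}F^{dkj}_{c;iq}e^{ap}_{j;cq}\otimes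 e^{pb}_{k;qd}$ (sum over $j,k$ admissible with $i$). $V_i$ is the $H_\mathcal{C}$-module with basis $v^{ab}_i$ ($(a,i,b)$ admissible) and $e^{ab}_{l;cd}\cdot v^{pq}_i=\frac{\delta_{i,l}\delta_{c,p}\delta_{d,q}}{\sqrt{d_i}}v^{ab}_i$. The tensor product of $H_\mathcal{C}$-modules is $U\otimes V=\Delta(\eta)\cdot(U\otimes_\mathbb{C}V)$ with $H_\mathcal{C}$ acting through $\Delta$. *)

theory Defs
  imports Complex_Main
begin

text \<open>
Skeletal data of a multiplicity-free unitary fusion category whose simple objects are
self-dual with trivial Frobenius--Schur indicators, in the gauge where trivalent vertices
are normalized by theta(a,b,c) = sqrt(d_a d_b d_c).
  L      : the (finite) set of simple objects (labels), u the unit object;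
  d      : quantum dimensions;
  adm a b c : (a,b,c) admissible, i.e. Hom(a (x) b, c) nonzero;
  F a b c e n m  =  F^{abc}_{e;nm}, where n is the intermediate of b (x) c and m that of a (x) b;
                    it is 0 whenever the labels are not admissible.
\<close>

type_synonym 'l hidx = "'l \<times> 'l \<times> 'l \<times> 'l \<times> 'l"

definition ufc_data ::
  "'l set \<Rightarrow> 'l \<Rightarrow> ('l \<Rightarrow> real) \<Rightarrow> ('l \<Rightarrow> 'l \<Rightarrow> 'l \<Rightarrow> bool)
   \<Rightarrow> ('l \<Rightarrow> 'l \<Rightarrow> 'l \<Rightarrow> 'l \<Rightarrow> 'l \<Rightarrow> 'l \<Rightarrow> complex) \<Rightarrow> bool" where
"ufc_data L u d adm F \<longleftrightarrow>
   finite L \<and> u \<in> L \<and>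
   (\<forall>a b c. adm a b c \<longrightarrow> a \<in> L \<and> b \<in> L \<and> c \<in> L) \<and>
   (\<forall>a b c. adm a b c \<longrightarrow> adm b a c \<and> adm a c b) \<and>
   (\<forall>a\<in>L. \<forall>b\<in>L. adm u a b \<longleftrightarrow> a = b) \<and>
   (\<forall>a\<in>L. d a > 0) \<and> d u = 1 \<and>
   (\<forall>a\<in>L. \<forall>b\<in>L. d a * d b = (\<Sum>c\<in>{c\<in>L. adm a b c}. d c)) \<and>
   (\<forall>a b c e n m. F a b c e n m \<noteq> 0 \<longrightarrow>
        adm b c n \<and> adm a n e \<and> adm a b m \<and> adm m c e) \<and>
   (\<forall>a\<in>L. \<forall>b\<in>L. \<forall>c\<in>L. \<forall>e\<in>L. \<forall>m\<in>L. \<forall>m'\<in>L.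
        adm a b m \<and> adm m c e \<and> adm a b m' \<and> adm m' c e \<longrightarrow>
        (\<Sum>n\<in>L. cnj (F a b c e n m) * F a b c e n m') = (if m = m' then 1 else 0)) \<and>
   (\<forall>a\<in>L. \<forall>b\<in>L. \<forall>c\<in>L. \<forall>e\<in>L. \<forall>n\<in>L. \<forall>n'\<in>L.
        adm b c n \<and> adm a n e \<and> adm b c n' \<and> adm a n' e \<longrightarrow>
        (\<Sum>m\<in>L. F a b c e n m * cnj (F a b c e n' m)) = (if n = n' then 1 else 0)) \<and>
   (\<forall>a\<in>L. \<forall>b\<in>L. \<forall>c\<in>L. \<forall>x\<in>L. \<forall>e\<in>L. \<forall>p\<in>L. \<forall>q\<in>L. \<forall>r\<in>L. \<forall>s\<in>L.
        F p c x e r q * F a b r e s p =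
        (\<Sum>t\<in>L. F a b c q t p * F a t x e s q * F b c x s r t)) \<and>
   (\<forall>a\<in>L. \<forall>b\<in>L. \<forall>c\<in>L. adm a b c \<longrightarrow>
        F u a b c c a = 1 \<and> F a u b c b a = 1 \<and> F a b u c b c = 1) \<and>
   (\<forall>a\<in>L. \<forall>b\<in>L. \<forall>c\<in>L. \<forall>e\<in>L. \<forall>n\<in>L. \<forall>m\<in>L.
        F e c b a n m = cnj (F a b c e n m) \<and>
        F b a e c n m = cnj (F a b c e n m) \<and>
        F a m c n e b * complex_of_real (sqrt (d n * d m))
          = cnj (F a b c e n m) * complex_of_real (sqrt (d e * d b)))"

text \<open>Indices (a,b) of the basis vectors v^{ab}_i of V_i, and the carrier of V_i
(coefficient vectors).\<close>
definition Vidx :: "'l set \<Rightarrow> ('l \<Rightarrow> 'l \<Rightarrow> 'l \<Rightarrow> bool) \<Rightarrow> 'l \<Rightarrow> ('l \<times> 'l) set" where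
"Vidx L adm i = {(a,b). a \<in> L \<and> b \<in> L \<and> adm a i b}"

definition Vmod :: "'l set \<Rightarrow> ('l \<Rightarrow> 'l \<Rightarrow> 'l \<Rightarrow> bool) \<Rightarrow> 'l \<Rightarrow> ('l \<times> 'l \<Rightarrow> complex) set" where
"Vmod L adm i = {x. \<forall>z. x z \<noteq> 0 \<longrightarrow> z \<in> Vidx L adm i}"

text \<open>Indices (a,b,i,c,e) of the basis elements e^{ab}_{i;ce} of H_C; an element of H_C
is a coefficient function on these indices.\<close>
definition Hidx :: "'l set \<Rightarrow> ('l \<Rightarrow> 'l \<Rightarrow> 'l \<Rightarrow> bool) \<Rightarrow> 'l hidx set" where
"Hidx L adm = {(a,b,i,c,e). a \<in> L \<and> b \<in> L \<and> i \<in> L \<and> c \<in> L \<and> e \<in> L \<and> adm a i b \<and> adm i e c}"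

text \<open>Matrix coefficient: the coefficient of v^{alpha}_i in e_iota . v^{gamma}_i.\<close>
definition rep :: "('l \<Rightarrow> real) \<Rightarrow> 'l \<Rightarrow> 'l hidx \<Rightarrow> 'l \<times> 'l \<Rightarrow> 'l \<times> 'l \<Rightarrow> complex" where
"rep d i \<iota> \<alpha> \<gamma> = (case \<iota> of (a,b,l,c,e) \<Rightarrow>
    if l = i \<and> \<alpha> = (a,b) \<and> \<gamma> = (c,e) then 1 / complex_of_real (sqrt (d i)) else 0)"

definition actV :: "'l set \<Rightarrow> ('l \<Rightarrow> real) \<Rightarrow> ('l \<Rightarrow> 'l \<Rightarrow> 'l \<Rightarrow> bool) \<Rightarrow> 'l
    \<Rightarrow> ('l hidx \<Rightarrow> complex) \<Rightarrow> ('l \<times> 'l \<Rightarrow> complex) \<Rightarrow> ('l \<times> 'l \<Rightarrow> complex)" where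
"actV L d adm i h x = (\<lambda>\<alpha>. \<Sum>\<iota>\<in>Hidx L adm. \<Sum>\<gamma>\<in>Vidx L adm i. h \<iota> * rep d i \<iota> \<alpha> \<gamma> * x \<gamma>)"

definition eta :: "'l set \<Rightarrow> ('l \<Rightarrow> real) \<Rightarrow> ('l \<Rightarrow> 'l \<Rightarrow> 'l \<Rightarrow> bool) \<Rightarrow> 'l hidx \<Rightarrow> complex" where
"eta L d adm = (\<lambda>(a,b,i,c,e). if (a,b,i,c,e) \<in> Hidx L adm \<and> c = a \<and> e = b
                              then complex_of_real (sqrt (d i)) else 0)"

text \<open>Comultiplication of a basis element, as an element of H_C (x) H_C
(coefficient function on pairs of basis indices).\<close>
definition Delta_basis :: "'l set \<Rightarrow> ('l \<Rightarrow> real) \<Rightarrow> ('l \<Rightarrow> 'l \<Rightarrow> 'l \<Rightarrow> bool)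
    \<Rightarrow> ('l \<Rightarrow> 'l \<Rightarrow> 'l \<Rightarrow> 'l \<Rightarrow> 'l \<Rightarrow> 'l \<Rightarrow> complex) \<Rightarrow> 'l hidx \<Rightarrow> ('l hidx \<times> 'l hidx \<Rightarrow> complex)" where
"Delta_basis L d adm F \<iota> XY =
   (case \<iota> of (a,b,i,c,e) \<Rightarrow>
    (case XY of ((a1,p1,j,c1,q1),(p2,b2,k,q2,e2)) \<Rightarrow>
      if a1 = a \<and> c1 = c \<and> b2 = b \<and> e2 = e \<and> p1 = p2 \<and> q1 = q2 \<and> j \<in> L \<and> k \<in> L \<and> adm i j k
      then complex_of_real (sqrt (d j * d k) / sqrt (d i)) * F a j k b i p1 * F e k j c i q1
      else 0))"

definition Delta :: "'l set \<Rightarrow> ('l \<Rightarrow> real) \<Rightarrow> ('l \<Rightarrow> 'l \<Rightarrow> 'l \<Rightarrow> bool)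
    \<Rightarrow> ('l \<Rightarrow> 'l \<Rightarrow> 'l \<Rightarrow> 'l \<Rightarrow> 'l \<Rightarrow> 'l \<Rightarrow> complex) \<Rightarrow> ('l hidx \<Rightarrow> complex) \<Rightarrow> ('l hidx \<times> 'l hidx \<Rightarrow> complex)" where
"Delta L d adm F h = (\<lambda>XY. \<Sum>\<iota>\<in>Hidx L adm. h \<iota> * Delta_basis L d adm F \<iota> XY)"

text \<open>V_j (x)_C V_k as coefficient functions on pairs of basis indices, and the action
of H_C (x) H_C on it.\<close>
definition TCmod :: "'l set \<Rightarrow> ('l \<Rightarrow> 'l \<Rightarrow> 'l \<Rightarrow> bool) \<Rightarrow> 'l \<Rightarrow> 'l
    \<Rightarrow> (('l \<times> 'l) \<times> ('l \<times> 'l) \<Rightarrow> complex) set" where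
"TCmod L adm j k = {t. \<forall>z. t z \<noteq> 0 \<longrightarrow> z \<in> Vidx L adm j \<times> Vidx L adm k}"

definition actT :: "'l set \<Rightarrow> ('l \<Rightarrow> real) \<Rightarrow> ('l \<Rightarrow> 'l \<Rightarrow> 'l \<Rightarrow> bool) \<Rightarrow> 'l \<Rightarrow> 'l
    \<Rightarrow> ('l hidx \<times> 'l hidx \<Rightarrow> complex) \<Rightarrow> (('l \<times> 'l) \<times> ('l \<times> 'l) \<Rightarrow> complex)
    \<Rightarrow> (('l \<times> 'l) \<times> ('l \<times> 'l) \<Rightarrow> complex)" where
"actT L d adm j k X t = (\<lambda>(\<alpha>,\<beta>).
    \<Sum>(\<iota>,\<kappa>)\<in>Hidx L adm \<times> Hidx L adm. \<Sum>(\<gamma>,\<delta>)\<in>Vidx L adm j \<times> Vidx L adm k.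
       X (\<iota>,\<kappa>) * rep d j \<iota> \<alpha> \<gamma> * rep d k \<kappa> \<beta> \<delta> * t (\<gamma>,\<delta>))"

text \<open>The H_C-module V_j (x) V_k = Delta(eta) . (V_j (x)_C V_k), with H_C acting through Delta.\<close>
definition tens_carrier :: "'l set \<Rightarrow> ('l \<Rightarrow> real) \<Rightarrow> ('l \<Rightarrow> 'l \<Rightarrow> 'l \<Rightarrow> bool)
    \<Rightarrow> ('l \<Rightarrow> 'l \<Rightarrow> 'l \<Rightarrow> 'l \<Rightarrow> 'l \<Rightarrow> 'l \<Rightarrow> complex) \<Rightarrow> 'l \<Rightarrow> 'l
    \<Rightarrow> (('l \<times> 'l) \<times> ('l \<times> 'l) \<Rightarrow> complex) set" where
"tens_carrier L d adm F j k = actT L d adm j k (Delta L d adm F (eta L d adm)) ` TCmod L adm j k"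

definition tens_act :: "'l set \<Rightarrow> ('l \<Rightarrow> real) \<Rightarrow> ('l \<Rightarrow> 'l \<Rightarrow> 'l \<Rightarrow> bool)
    \<Rightarrow> ('l \<Rightarrow> 'l \<Rightarrow> 'l \<Rightarrow> 'l \<Rightarrow> 'l \<Rightarrow> 'l \<Rightarrow> complex) \<Rightarrow> 'l \<Rightarrow> 'l
    \<Rightarrow> ('l hidx \<Rightarrow> complex) \<Rightarrow> (('l \<times> 'l) \<times> ('l \<times> 'l) \<Rightarrow> complex)
    \<Rightarrow> (('l \<times> 'l) \<times> ('l \<times> 'l) \<Rightarrow> complex)" where
"tens_act L d adm F j k h t = actT L d adm j k (Delta L d adm F h) t"

definition uvec :: "('l \<Rightarrow> 'l \<Rightarrow> 'l \<Rightarrow> 'l \<Rightarrow> 'l \<Rightarrow> 'l \<Rightarrow> complex) \<Rightarrow> 'l \<Rightarrow> 'l \<Rightarrow> 'l \<Rightarrow> 'l \<Rightarrow> 'l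
    \<Rightarrow> (('l \<times> 'l) \<times> ('l \<times> 'l) \<Rightarrow> complex)" where
"uvec F j k i a b = (\<lambda>((x,y),(y',z)). if x = a \<and> z = b \<and> y = y' then F a j k b i y else 0)"

definition phi :: "'l set \<Rightarrow> ('l \<Rightarrow> 'l \<Rightarrow> 'l \<Rightarrow> bool) \<Rightarrow> ('l \<Rightarrow> 'l \<Rightarrow> 'l \<Rightarrow> 'l \<Rightarrow> 'l \<Rightarrow> 'l \<Rightarrow> complex)
    \<Rightarrow> 'l \<Rightarrow> 'l \<Rightarrow> 'l \<Rightarrow> ('l \<times> 'l \<Rightarrow> complex) \<Rightarrow> (('l \<times> 'l) \<times> ('l \<times> 'l) \<Rightarrow> complex)" where
"phi L adm F j k i x = (\<lambda>z. \<Sum>(a,b)\<in>Vidx L adm i. x (a,b) * uvec F j k i a b z)"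

definition Wspan :: "'l set \<Rightarrow> ('l \<Rightarrow> 'l \<Rightarrow> 'l \<Rightarrow> bool) \<Rightarrow> ('l \<Rightarrow> 'l \<Rightarrow> 'l \<Rightarrow> 'l \<Rightarrow> 'l \<Rightarrow> 'l \<Rightarrow> complex)
    \<Rightarrow> 'l \<Rightarrow> 'l \<Rightarrow> 'l \<Rightarrow> (('l \<times> 'l) \<times> ('l \<times> 'l) \<Rightarrow> complex) set" where
"Wspan L adm F j k i =
   {(\<lambda>z. \<Sum>(a,b)\<in>Vidx L adm i. c (a,b) * uvec F j k i a b z) | c. True}"

definition dsum_carrier :: "'l set \<Rightarrow> ('l \<Rightarrow> 'l \<Rightarrow> 'l \<Rightarrow> bool) \<Rightarrow> 'l \<Rightarrow> 'l
    \<Rightarrow> ('l \<Rightarrow> 'l \<times> 'l \<Rightarrow> complex) set" where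
"dsum_carrier L adm j k =
   {f. \<forall>i. (i \<in> L \<and> adm i j k \<longrightarrow> f i \<in> Vmod L adm i) \<and>
           (\<not> (i \<in> L \<and> adm i j k) \<longrightarrow> f i = (\<lambda>_. 0))}"

definition ds_act :: "'l set \<Rightarrow> ('l \<Rightarrow> real) \<Rightarrow> ('l \<Rightarrow> 'l \<Rightarrow> 'l \<Rightarrow> bool)
    \<Rightarrow> ('l hidx \<Rightarrow> complex) \<Rightarrow> ('l \<Rightarrow> 'l \<times> 'l \<Rightarrow> complex) \<Rightarrow> ('l \<Rightarrow> 'l \<times> 'l \<Rightarrow> complex)" where
"ds_act L d adm h f = (\<lambda>i. actV L d adm i h (f i))"

end

theory Submission
  imports Defs
begin

lemma sum_single:
  assumes "finite A" "\<And>x. x \<in> A \<Longrightarrow> x \<noteq> w \<Longrightarrow> f x = 0"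
  shows "sum f A = (if w \<in> A then f w else 0)"
proof (cases "w \<in> A")
  case True
  then have "sum f A = f w + sum f (A - {w})" using assms(1) by (simp add: sum.remove)
  also have "sum f (A - {w}) = 0" using assms(2) by (intro sum.neutral) auto
  finally show ?thesis using True by simp
next
  case False
  then show ?thesis using assms by (auto intro: sum.neutral)
qed

lemma sum_reindex_gen:
  assumes "finite A" "finite B" "inj_on m B"
    "\<And>z. z \<in> A \<Longrightarrow> g z \<noteq> 0 \<Longrightarrow> z \<in> m ` B"
    "\<And>q. q \<in> B \<Longrightarrow> g (m q) \<noteq> 0 \<Longrightarrow> m q \<in> A"
  shows "sum g A = (\<Sum>q\<in>B. g (m q))"
proof -
  have "sum g A = sum g (A \<inter> m ` B)"
    using assms by (intro sum.mono_neutral_right) auto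
  also have "\<dots> = sum g (m ` B)"
    using assms by (intro sum.mono_neutral_left) auto
  also have "\<dots> = (\<Sum>q\<in>B. g (m q))" using assms(3) by (simp add: sum.reindex)
  finally show ?thesis .
qed

lemma sum_prod': "(\<Sum>x\<in>A. \<Sum>y\<in>B. G (x,y)) = (\<Sum>w\<in>A\<times>B. G w)"
  by (simp add: sum.cartesian_product)

locale ufc =
  fixes L :: "'l set" and u :: 'l and d :: "'l \<Rightarrow> real"
    and adm :: "'l \<Rightarrow> 'l \<Rightarrow> 'l \<Rightarrow> bool"
    and F :: "'l \<Rightarrow> 'l \<Rightarrow> 'l \<Rightarrow> 'l \<Rightarrow> 'l \<Rightarrow> 'l \<Rightarrow> complex"
    and j k :: 'l
  assumes ufc: "ufc_data L u d adm F" and jL: "j \<in> L" and kL: "k \<in> L"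
begin

lemma U1: "finite L"
  using ufc unfolding ufc_data_def by (elim conjE) assumption
lemma U2: "(\<forall>a b c. adm a b c \<longrightarrow> a \<in> L \<and> b \<in> L \<and> c \<in> L)"
  using ufc unfolding ufc_data_def by (elim conjE) assumption
lemma U3: "(\<forall>a b c. adm a b c \<longrightarrow> adm b a c \<and> adm a c b)"
  using ufc unfolding ufc_data_def by (elim conjE) assumption
lemma U4: "(\<forall>a\<in>L. d a > 0)"
  using ufc unfolding ufc_data_def by (elim conjE) assumption
lemma U5: "(\<forall>a b c e n m. F a b c e n m \<noteq> 0 \<longrightarrow>
        adm b c n \<and> adm a n e \<and> adm a b m \<and> adm m c e)"
  using ufc unfolding ufc_data_def by (elim conjE) assumption
lemma U6: "(\<forall>a\<in>L. \<forall>b\<in>L. \<forall>c\<in>L. \<forall>e\<in>L. \<forall>n\<in>L. \<forall>n'\<in>L.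
        adm b c n \<and> adm a n e \<and> adm b c n' \<and> adm a n' e \<longrightarrow>
        (\<Sum>m\<in>L. F a b c e n m * cnj (F a b c e n' m)) = (if n = n' then 1 else 0))"
  using ufc unfolding ufc_data_def by (elim conjE) assumption
lemma U7: "(\<forall>a\<in>L. \<forall>b\<in>L. \<forall>c\<in>L. \<forall>e\<in>L. \<forall>n\<in>L. \<forall>m\<in>L.
        F e c b a n m = cnj (F a b c e n m) \<and>
        F b a e c n m = cnj (F a b c e n m) \<and>
        F a m c n e b * complex_of_real (sqrt (d n * d m))
          = cnj (F a b c e n m) * complex_of_real (sqrt (d e * d b)))"
  using ufc unfolding ufc_data_def by (elim conjE) assumption


lemma finL: "finite L" using U1 .
lemma admL: "adm a b c \<Longrightarrow> a \<in> L \<and> b \<in> L \<and> c \<in> L" using U2 by blast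
lemma adm_sw: "adm a b c \<Longrightarrow> adm b a c \<and> adm a c b" using U3 by blast
lemma adm_perm: assumes "adm a b c" shows "adm b a c" "adm a c b" "adm b c a" "adm c a b" "adm c b a"
  using adm_sw assms by blast+
lemma dpos: "a \<in> L \<Longrightarrow> d a > 0" using U4 by blast
lemma Fsupp: "F a b c e n m \<noteq> 0 \<Longrightarrow> adm b c n \<and> adm a n e \<and> adm a b m \<and> adm m c e"
  using U5 by blast
lemma unit2: "a\<in>L \<Longrightarrow> b\<in>L \<Longrightarrow> c\<in>L \<Longrightarrow> e\<in>L \<Longrightarrow> n\<in>L \<Longrightarrow> n'\<in>L \<Longrightarrow>
        adm b c n \<Longrightarrow> adm a n e \<Longrightarrow> adm b c n' \<Longrightarrow> adm a n' e \<Longrightarrow>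
        (\<Sum>m\<in>L. F a b c e n m * cnj (F a b c e n' m)) = (if n = n' then 1 else 0)"
  using U6 by blast
lemma Fsym: "a\<in>L \<Longrightarrow> b\<in>L \<Longrightarrow> c\<in>L \<Longrightarrow> e\<in>L \<Longrightarrow> n\<in>L \<Longrightarrow> m\<in>L \<Longrightarrow>
        F e c b a n m = cnj (F a b c e n m)"
  using U7 by blast

abbreviation "H \<equiv> Hidx L adm"
abbreviation "V i \<equiv> Vidx L adm i"
definition "Ijk = {i\<in>L. adm i j k}"
definition "lam i c e t = (\<Sum>q\<in>L. F e k j c i q * t ((c,q),(q,e)))"
definition "Psi f = (\<lambda>z. \<Sum>i\<in>Ijk. phi L adm F j k i (f i) z)"

lemma finH: "finite H"
proof -
  have "H \<subseteq> L \<times> L \<times> L \<times> L \<times> L" unfolding Hidx_def by auto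
  then show ?thesis using finL by (meson finite_SigmaI finite_subset)
qed
lemma finV: "finite (V i)"
proof -
  have "V i \<subseteq> L \<times> L" unfolding Vidx_def by auto
  then show ?thesis using finL by (meson finite_SigmaI finite_subset)
qed
lemma finI: "finite Ijk" unfolding Ijk_def using finL by simp

lemma phi_closed: "phi L adm F j k i x ((z1,z2),(z3,z4)) =
   (if z2 = z3 then x (z1,z4) * F z1 j k z4 i z2 else 0)"
proof -
  have "phi L adm F j k i x ((z1,z2),(z3,z4)) =
     (\<Sum>w\<in>V i. (case w of (a,b) \<Rightarrow> x (a,b) * uvec F j k i a b ((z1,z2),(z3,z4))))"
    unfolding phi_def by simp
  also have "\<dots> = (if (z1,z4) \<in> V i then x (z1,z4) * uvec F j k i z1 z4 ((z1,z2),(z3,z4)) else 0)"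
    by (subst sum_single[OF finV, where w="(z1,z4)"]) (auto simp: uvec_def split: if_splits)
  also have "\<dots> = (if z2 = z3 then x (z1,z4) * F z1 j k z4 i z2 else 0)"
    using Fsupp[of z1 j k z4 i z2] admL by (auto simp: uvec_def Vidx_def)
  finally show ?thesis .
qed

lemma Psi_closed: "Psi f ((z1,z2),(z3,z4)) =
   (if z2 = z3 then (\<Sum>i\<in>Ijk. f i (z1,z4) * F z1 j k z4 i z2) else 0)"
  unfolding Psi_def phi_closed by simp

lemma orth: assumes "i \<in> Ijk" "i' \<in> Ijk" "(c,e) \<in> V i"
  shows "(\<Sum>q\<in>L. F c j k e i' q * cnj (F c j k e i q)) = (if i' = i then 1 else 0)"
proof -
  have cL: "c \<in> L" "e \<in> L" "adm c i e" using assms(3) by (auto simp: Vidx_def)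
  have iL: "i \<in> L" "adm i j k" "i' \<in> L" "adm i' j k" using assms(1,2) by (auto simp: Ijk_def)
  show ?thesis
  proof (cases "adm c i' e")
    case True
    then show ?thesis using unit2[of c j k e i' i] cL iL jL kL adm_perm(3)[OF iL(2)] adm_perm(3)[OF iL(4)] by auto
  next
    case False
    then have "\<And>q. F c j k e i' q = 0" using Fsupp by blast
    moreover have "i' \<noteq> i" using False cL by auto
    ultimately show ?thesis by simp
  qed
qed

lemma lam_Psi: assumes "i \<in> Ijk" "(c,e) \<in> V i"
  shows "lam i c e (Psi f) = f i (c,e)"
proof -
  have cL: "c \<in> L" "e \<in> L" using assms(2) by (auto simp: Vidx_def)
  have iL: "i \<in> L" using assms(1) by (auto simp: Ijk_def)
  have "lam i c e (Psi f) = (\<Sum>q\<in>L. F e k j c i q * (\<Sum>i'\<in>Ijk. f i' (c,e) * F c j k e i' q))"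
    unfolding lam_def Psi_closed by simp
  also have "\<dots> = (\<Sum>q\<in>L. \<Sum>i'\<in>Ijk. f i' (c,e) * (F c j k e i' q * cnj (F c j k e i q)))"
    by (intro sum.cong refl) (simp add: sum_distrib_left Fsym[OF cL(1) jL kL cL(2) iL] mult_ac)
  also have "\<dots> = (\<Sum>i'\<in>Ijk. f i' (c,e) * (\<Sum>q\<in>L. F c j k e i' q * cnj (F c j k e i q)))"
    by (simp add: sum.swap[of _ L] sum_distrib_left)
  also have "\<dots> = (\<Sum>i'\<in>Ijk. f i' (c,e) * (if i' = i then 1 else 0))"
    proof (rule sum.cong[OF refl])
    fix x assume "x \<in> Ijk"
    show "f x (c,e) * (\<Sum>q\<in>L. F c j k e x q * cnj (F c j k e i q)) = f x (c,e) * (if x = i then 1 else 0)"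
      by (subst orth[OF assms(1) \<open>x \<in> Ijk\<close> assms(2)]) (rule refl)
  qed
  also have "\<dots> = f i (c,e)" using assms(1) finI by (simp add: if_distrib cong: if_cong)
  finally show ?thesis .
qed

lemma DB_val: "Delta_basis L d adm F (a,b,i0,c,e) ((a1,p1,j1,c1,q1),(p2,b2,k1,q2,e2)) =
   (if a1 = a \<and> c1 = c \<and> b2 = b \<and> e2 = e \<and> p1 = p2 \<and> q1 = q2 \<and> j1 \<in> L \<and> k1 \<in> L \<and> adm i0 j1 k1
      then complex_of_real (sqrt (d j1 * d k1) / sqrt (d i0)) * F a j1 k1 b i0 p1 * F e k1 j1 c i0 q1
      else 0)"
  unfolding Delta_basis_def by simp

lemma rep_val: "rep d i (a,b,l,c,e) \<alpha> \<gamma> = (if l = i \<and> \<alpha> = (a,b) \<and> \<gamma> = (c,e) then 1 / complex_of_real (sqrt (d i)) else 0)"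
  unfolding rep_def by simp

definition "gT o' z1 z2 z3 z4 t = (\<lambda>w. case w of ((\<iota>,\<kappa>),(\<gamma>,\<delta>)) \<Rightarrow>
     Delta_basis L d adm F o' (\<iota>,\<kappa>) * rep d j \<iota> (z1,z2) \<gamma> * rep d k \<kappa> (z3,z4) \<delta> * t (\<gamma>,\<delta>))"

lemma T_reindex:
  "(\<Sum>w\<in>(H \<times> H) \<times> (V j \<times> V k). gT (a,b,i0,c,e) z1 z2 z3 z4 t w) =
   (\<Sum>q\<in>L. gT (a,b,i0,c,e) z1 z2 z3 z4 t (((z1,z2,j,c,q),(z3,z4,k,q,e)),((c,q),(q,e))))"
proof (rule sum_reindex_gen)
  show "finite ((H \<times> H) \<times> (V j \<times> V k))" using finH finV by simp
  show "finite L" by (rule finL)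
  show "inj_on (\<lambda>q. (((z1,z2,j,c,q),(z3,z4,k,q,e)),((c,q),(q,e)))) L" by (rule inj_onI) simp
next
  fix w assume w: "w \<in> (H \<times> H) \<times> (V j \<times> V k)" and nz: "gT (a,b,i0,c,e) z1 z2 z3 z4 t w \<noteq> 0"
  obtain i1 i2 i3 i4 i5 k1 k2 k3 k4 k5 g1 g2 h1 h2 where
    wd: "w = (((i1,i2,i3,i4,i5),(k1,k2,k3,k4,k5)),((g1,g2),(h1,h2)))"
    by (metis prod.exhaust)
  from nz show "w \<in> (\<lambda>q. (((z1,z2,j,c,q),(z3,z4,k,q,e)),((c,q),(q,e)))) ` L"
    using w unfolding wd gT_def by (auto simp: DB_val rep_val Hidx_def split: if_splits)
next
  fix q assume q: "q \<in> L" and nz: "gT (a,b,i0,c,e) z1 z2 z3 z4 t (((z1,z2,j,c,q),(z3,z4,k,q,e)),((c,q),(q,e))) \<noteq> 0"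
  then have eqs: "z1 = a" "z4 = b" "z2 = z3" "adm i0 j k" and
     F1: "F a j k b i0 z2 \<noteq> 0" and F2: "F e k j c i0 q \<noteq> 0"
    unfolding gT_def by (auto simp: DB_val rep_val split: if_splits)
  from Fsupp[OF F1] have A1: "adm a j z2" "adm z2 k b" by auto
  from Fsupp[OF F2] have A2: "adm e k q" "adm q j c" by auto
  show "(((z1,z2,j,c,q),(z3,z4,k,q,e)),((c,q),(q,e))) \<in> (H \<times> H) \<times> (V j \<times> V k)"
    using eqs A1 A2 admL[OF A1(1)] admL[OF A1(2)] admL[OF A2(1)] admL[OF A2(2)]
      adm_perm(1)[OF A2(2)] adm_perm(1)[OF A2(1)] adm_perm(5)[OF A2(1)] adm_perm(5)[OF A2(2)]
    by (auto simp: Hidx_def Vidx_def)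
qed

lemma coef_eq: "complex_of_real (sqrt (d j * d k) / sqrt (d i0)) * (1 / complex_of_real (sqrt (d j))) *
      (1 / complex_of_real (sqrt (d k))) = 1 / complex_of_real (sqrt (d i0))"
proof -
  have p: "sqrt (d j) > 0" "sqrt (d k) > 0" using dpos[OF jL] dpos[OF kL] by auto
  have "sqrt (d j * d k) / sqrt (d i0) * (1 / sqrt (d j)) * (1 / sqrt (d k)) = 1 / sqrt (d i0)"
    using p by (simp add: real_sqrt_mult field_simps)
  then have "complex_of_real (sqrt (d j * d k) / sqrt (d i0) * (1 / sqrt (d j)) * (1 / sqrt (d k))) =
    complex_of_real (1 / sqrt (d i0))" by simp
  then show ?thesis by simp
qed

lemma T_eval:
  "(\<Sum>w\<in>(H \<times> H) \<times> (V j \<times> V k). gT (a,b,i0,c,e) z1 z2 z3 z4 t w) =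
   (if z1 = a \<and> z4 = b \<and> z2 = z3 \<and> adm i0 j k
    then 1 / complex_of_real (sqrt (d i0)) * F a j k b i0 z2 * lam i0 c e t else 0)"
proof (cases "z1 = a \<and> z4 = b \<and> z2 = z3 \<and> adm i0 j k")
  case True
  have "(\<Sum>w\<in>(H \<times> H) \<times> (V j \<times> V k). gT (a,b,i0,c,e) z1 z2 z3 z4 t w) =
    (\<Sum>q\<in>L. (complex_of_real (sqrt (d j * d k) / sqrt (d i0)) * (1 / complex_of_real (sqrt (d j))) *
      (1 / complex_of_real (sqrt (d k)))) * F a j k b i0 z2 * (F e k j c i0 q * t ((c,q),(q,e))))"
    unfolding T_reindex using True jL kL
    by (intro sum.cong refl) (simp add: gT_def DB_val rep_val mult_ac)
  also have "\<dots> = 1 / complex_of_real (sqrt (d i0)) * F a j k b i0 z2 * lam i0 c e t"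
    unfolding coef_eq lam_def by (simp add: sum_distrib_left)
  finally show ?thesis using True by simp
next
  case False
  then show ?thesis unfolding T_reindex
    by (auto simp: gT_def DB_val rep_val intro!: sum.neutral)
qed

lemma act_expand: "tens_act L d adm F j k h t ((z1,z2),(z3,z4)) =
   (\<Sum>o'\<in>H. h o' * (\<Sum>w\<in>(H \<times> H) \<times> (V j \<times> V k). gT o' z1 z2 z3 z4 t w))"
proof -
  have "tens_act L d adm F j k h t ((z1,z2),(z3,z4)) =
     (\<Sum>x\<in>H \<times> H. \<Sum>y\<in>V j \<times> V k. \<Sum>o'\<in>H. h o' * gT o' z1 z2 z3 z4 t (x,y))"
    unfolding tens_act_def actT_def Delta_def gT_def
    apply (simp add: case_prod_unfold)
    apply (intro sum.cong refl)
    apply (simp add: sum_distrib_left mult_ac)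
    done
  also have "\<dots> = (\<Sum>w\<in>(H \<times> H) \<times> (V j \<times> V k). \<Sum>o'\<in>H. h o' * gT o' z1 z2 z3 z4 t w)"
    by (rule sum_prod')
  also have "\<dots> = (\<Sum>o'\<in>H. \<Sum>w\<in>(H \<times> H) \<times> (V j \<times> V k). h o' * gT o' z1 z2 z3 z4 t w)"
    by (rule sum.swap)
  also have "\<dots> = (\<Sum>o'\<in>H. h o' * (\<Sum>w\<in>(H \<times> H) \<times> (V j \<times> V k). gT o' z1 z2 z3 z4 t w))"
    by (simp add: sum_distrib_left)
  finally show ?thesis .
qed

lemma inner_collapse: assumes "o' \<in> H"
  shows "(\<Sum>i\<in>Ijk. \<Sum>\<gamma>\<in>V i. h o' * rep d i o' (z1,z4) \<gamma> * lam i (fst \<gamma>) (snd \<gamma>) t * F z1 j k z4 i z2) =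
     h o' * (case o' of (a,b,i0,c,e) \<Rightarrow> if z1 = a \<and> z4 = b \<and> adm i0 j k
        then 1 / complex_of_real (sqrt (d i0)) * F a j k b i0 z2 * lam i0 c e t else 0)"
proof -
  obtain a b i0 c e where o': "o' = (a,b,i0,c,e)" by (metis prod.exhaust)
  have ce: "(c,e) \<in> V i0" "i0 \<in> L" using assms adm_perm(4) unfolding o' by (auto simp: Hidx_def Vidx_def)
  have "\<And>i. i \<in> Ijk \<Longrightarrow> (\<Sum>\<gamma>\<in>V i. h o' * rep d i o' (z1,z4) \<gamma> * lam i (fst \<gamma>) (snd \<gamma>) t * F z1 j k z4 i z2)
     = (if i = i0 then h o' * (if z1 = a \<and> z4 = b then 1 / complex_of_real (sqrt (d i0)) * F a j k b i0 z2 * lam i0 c e t else 0) else 0)"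
  proof -
    fix i assume "i \<in> Ijk"
    show "?thesis i"
      apply (subst sum_single[OF finV, where w="(c,e)"])
      using ce by (auto simp: o' rep_val mult_ac)
  qed
  then have "(\<Sum>i\<in>Ijk. \<Sum>\<gamma>\<in>V i. h o' * rep d i o' (z1,z4) \<gamma> * lam i (fst \<gamma>) (snd \<gamma>) t * F z1 j k z4 i z2) =
     (\<Sum>i\<in>Ijk. (if i = i0 then h o' * (if z1 = a \<and> z4 = b then 1 / complex_of_real (sqrt (d i0)) * F a j k b i0 z2 * lam i0 c e t else 0) else 0))"
    by (rule sum.cong[OF refl])
  also have "\<dots> = (if i0 \<in> Ijk then h o' * (if z1 = a \<and> z4 = b then 1 / complex_of_real (sqrt (d i0)) * F a j k b i0 z2 * lam i0 c e t else 0) else 0)"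
    using finI by simp
  also have "\<dots> = h o' * (case o' of (a,b,i0,c,e) \<Rightarrow> if z1 = a \<and> z4 = b \<and> adm i0 j k
        then 1 / complex_of_real (sqrt (d i0)) * F a j k b i0 z2 * lam i0 c e t else 0)"
    using ce by (auto simp: o' Ijk_def)
  finally show ?thesis .
qed

lemma K1: "tens_act L d adm F j k h t = Psi (\<lambda>i. actV L d adm i h (\<lambda>(c,e). lam i c e t))"
proof (rule ext)
  fix z :: "('l \<times> 'l) \<times> ('l \<times> 'l)"
  obtain z1 z2 z3 z4 where z: "z = ((z1,z2),(z3,z4))" by (metis prod.exhaust)
  have L1: "tens_act L d adm F j k h t z = (\<Sum>o'\<in>H. if z2 = z3 then h o' * (case o' of (a,b,i0,c,e) \<Rightarrow> if z1 = a \<and> z4 = b \<and> adm i0 j k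
        then 1 / complex_of_real (sqrt (d i0)) * F a j k b i0 z2 * lam i0 c e t else 0) else 0)"
    unfolding z act_expand
  proof (rule sum.cong[OF refl])
    fix o' :: "'l hidx"
    obtain a b i0 c e where o': "o' = (a,b,i0,c,e)" by (metis prod.exhaust)
    show "h o' * (\<Sum>w\<in>(H \<times> H) \<times> (V j \<times> V k). gT o' z1 z2 z3 z4 t w) = (if z2 = z3 then h o' * (case o' of (a,b,i0,c,e) \<Rightarrow> if z1 = a \<and> z4 = b \<and> adm i0 j k
        then 1 / complex_of_real (sqrt (d i0)) * F a j k b i0 z2 * lam i0 c e t else 0) else 0)"
      unfolding o' T_eval by auto
  qed
  show "tens_act L d adm F j k h t z = Psi (\<lambda>i. actV L d adm i h (\<lambda>(c,e). lam i c e t)) z"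
  proof (cases "z2 = z3")
    case False
    then show ?thesis unfolding L1 unfolding z Psi_closed by simp
  next
    case True
    then have z32: "z3 = z2" by simp
    have "Psi (\<lambda>i. actV L d adm i h (\<lambda>(c,e). lam i c e t)) z =
      (\<Sum>i\<in>Ijk. (\<Sum>o'\<in>H. \<Sum>\<gamma>\<in>V i. h o' * rep d i o' (z1,z4) \<gamma> * lam i (fst \<gamma>) (snd \<gamma>) t) * F z1 j k z4 i z2)"
      unfolding z Psi_closed actV_def z32 by (simp add: case_prod_unfold)
    also have "\<dots> = (\<Sum>i\<in>Ijk. \<Sum>o'\<in>H. \<Sum>\<gamma>\<in>V i. h o' * rep d i o' (z1,z4) \<gamma> * lam i (fst \<gamma>) (snd \<gamma>) t * F z1 j k z4 i z2)"
      by (simp add: sum_distrib_right)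
    also have "\<dots> = (\<Sum>o'\<in>H. \<Sum>i\<in>Ijk. \<Sum>\<gamma>\<in>V i. h o' * rep d i o' (z1,z4) \<gamma> * lam i (fst \<gamma>) (snd \<gamma>) t * F z1 j k z4 i z2)"
      by (rule sum.swap)
    also have "\<dots> = tens_act L d adm F j k h t z"
      unfolding L1 z32 by (intro sum.cong refl) (simp add: inner_collapse)
    finally show ?thesis by simp
  qed
qed

lemma actV_cong: "(\<And>\<gamma>. \<gamma> \<in> V i \<Longrightarrow> y \<gamma> = y' \<gamma>) \<Longrightarrow> actV L d adm i h y = actV L d adm i h y'"
  unfolding actV_def by (intro ext sum.cong refl) auto

lemma Psi_cong: "(\<And>i. i \<in> Ijk \<Longrightarrow> g i = g' i) \<Longrightarrow> Psi g = Psi g'"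
  unfolding Psi_def by (intro ext sum.cong refl) auto

lemma K2: "tens_act L d adm F j k h (Psi f) = Psi (\<lambda>i. actV L d adm i h (f i))"
  unfolding K1
proof (rule Psi_cong)
  fix i assume i: "i \<in> Ijk"
  show "actV L d adm i h (\<lambda>(c,e). lam i c e (Psi f)) = actV L d adm i h (f i)"
    by (rule actV_cong) (auto simp: lam_Psi[OF i])
qed

lemma actV_zero: "actV L d adm i h (\<lambda>_. 0) = (\<lambda>_. 0)"
  unfolding actV_def by simp

lemma actV_Vmod: "actV L d adm i h x \<in> Vmod L adm i"
  unfolding Vmod_def
proof (intro CollectI allI impI)
  fix z assume "actV L d adm i h x z \<noteq> 0"
  then obtain o' where o': "o' \<in> H" "(\<Sum>\<gamma>\<in>V i. h o' * rep d i o' z \<gamma> * x \<gamma>) \<noteq> 0"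
    unfolding actV_def by (rule sum.not_neutral_contains_not_neutral)
  obtain \<gamma> where "\<gamma> \<in> V i" "h o' * rep d i o' z \<gamma> * x \<gamma> \<noteq> 0"
    using o'(2) by (rule sum.not_neutral_contains_not_neutral)
  then have "rep d i o' z \<gamma> \<noteq> 0" by simp
  moreover obtain a b l c e where "o' = (a,b,l,c,e)" by (metis prod.exhaust)
  ultimately show "z \<in> V i" using o'(1) by (auto simp: rep_val Hidx_def Vidx_def split: if_splits)
qed

lemma actV_eta: assumes "x \<in> Vmod L adm i" shows "actV L d adm i (eta L d adm) x = x"
proof (rule ext)
  fix z :: "'l \<times> 'l"
  obtain a b where z: "z = (a,b)" by (metis prod.exhaust)
  have "actV L d adm i (eta L d adm) x z = (\<Sum>w\<in>H \<times> V i. eta L d adm (fst w) * rep d i (fst w) z (snd w) * x (snd w))"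
    unfolding actV_def by (rule sum_prod'[where G = "\<lambda>w. eta L d adm (fst w) * rep d i (fst w) z (snd w) * x (snd w)", simplified])
  also have "\<dots> = (if ((a,b,i,a,b),(a,b)) \<in> H \<times> V i then eta L d adm (a,b,i,a,b) * rep d i (a,b,i,a,b) z (a,b) * x (a,b) else 0)"
    apply (subst sum_single[OF _, where w="((a,b,i,a,b),(a,b))"])
    using finH finV apply simp
    apply (auto simp: z eta_def rep_def split: prod.splits if_splits)
    done
  also have "\<dots> = x z"
  proof (cases "(a,b) \<in> V i")
    case True
    then have "((a,b,i,a,b),(a,b)) \<in> H \<times> V i" "i \<in> L" using adm_perm(3) admL by (auto simp: Hidx_def Vidx_def)
    moreover have "sqrt (d i) > 0" using dpos \<open>i \<in> L\<close> by simp
    ultimately show ?thesis by (simp add: z eta_def rep_def)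
  next
    case False
    then show ?thesis using assms unfolding z Vmod_def by auto
  qed
  finally show "actV L d adm i (eta L d adm) x z = x z" .
qed

lemma Psi_single: assumes "i \<in> Ijk"
  shows "Psi (\<lambda>i'. if i' = i then x else (\<lambda>_. 0)) = phi L adm F j k i x"
proof (rule ext)
  fix z :: "('l \<times> 'l) \<times> ('l \<times> 'l)"
  obtain z1 z2 z3 z4 where z: "z = ((z1,z2),(z3,z4))" by (metis prod.exhaust)
  have "(\<Sum>i'\<in>Ijk. (if i' = i then x else (\<lambda>_. 0)) (z1,z4) * F z1 j k z4 i' z2)
     = (\<Sum>i'\<in>Ijk. if i' = i then x (z1,z4) * F z1 j k z4 i' z2 else 0)"
    by (intro sum.cong refl) auto
  also have "\<dots> = x (z1,z4) * F z1 j k z4 i z2" using assms finI by simp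
  finally have calc: "(\<Sum>i'\<in>Ijk. (if i' = i then x else (\<lambda>_. 0)) (z1,z4) * F z1 j k z4 i' z2) = x (z1,z4) * F z1 j k z4 i z2" .
  show "Psi (\<lambda>i'. if i' = i then x else (\<lambda>_. 0)) z = phi L adm F j k i x z"
    unfolding z Psi_closed phi_closed by (simp only: calc)
qed

lemma phi_restr: "phi L adm F j k i (\<lambda>\<gamma>. if \<gamma> \<in> V i then x \<gamma> else 0) = phi L adm F j k i x"
proof (rule ext)
  fix z :: "('l \<times> 'l) \<times> ('l \<times> 'l)"
  obtain z1 z2 z3 z4 where z: "z = ((z1,z2),(z3,z4))" by (metis prod.exhaust)
  have "F z1 j k z4 i z2 \<noteq> 0 \<Longrightarrow> (z1,z4) \<in> V i"
    using Fsupp[of z1 j k z4 i z2] admL by (auto simp: Vidx_def)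
  then show "phi L adm F j k i (\<lambda>\<gamma>. if \<gamma> \<in> V i then x \<gamma> else 0) z = phi L adm F j k i x z"
    unfolding z phi_closed by auto
qed

lemma Psi_add: "Psi (\<lambda>i z. f i z + g i z) = (\<lambda>z. Psi f z + Psi g z)"
proof (rule ext)
  fix z :: "('l \<times> 'l) \<times> ('l \<times> 'l)"
  obtain z1 z2 z3 z4 where z: "z = ((z1,z2),(z3,z4))" by (metis prod.exhaust)
  show "Psi (\<lambda>i z. f i z + g i z) z = Psi f z + Psi g z"
    unfolding z Psi_closed by (simp add: sum.distrib ring_distribs)
qed

lemma Psi_scal: "Psi (\<lambda>i z. c * f i z) = (\<lambda>z. c * Psi f z)"
proof (rule ext)
  fix z :: "('l \<times> 'l) \<times> ('l \<times> 'l)"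
  obtain z1 z2 z3 z4 where z: "z = ((z1,z2),(z3,z4))" by (metis prod.exhaust)
  show "Psi (\<lambda>i z. c * f i z) z = c * Psi f z"
    unfolding z Psi_closed by (simp add: sum_distrib_left mult_ac)
qed

lemma Psi_TC: "Psi f \<in> TCmod L adm j k"
  unfolding TCmod_def
proof (intro CollectI allI impI)
  fix z :: "('l \<times> 'l) \<times> ('l \<times> 'l)"
  obtain z1 z2 z3 z4 where z: "z = ((z1,z2),(z3,z4))" by (metis prod.exhaust)
  assume "Psi f z \<noteq> 0"
  then have "z2 = z3" "(\<Sum>i\<in>Ijk. f i (z1,z4) * F z1 j k z4 i z2) \<noteq> 0" unfolding z Psi_closed by (auto split: if_splits)
  moreover from this(2) obtain i where "f i (z1,z4) * F z1 j k z4 i z2 \<noteq> 0"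
    by (rule sum.not_neutral_contains_not_neutral)
  then have "F z1 j k z4 i z2 \<noteq> 0" by simp
  from Fsupp[OF this] have "adm z1 j z2" "adm z2 k z4" by auto
  ultimately show "z \<in> V j \<times> V k" unfolding z using admL by (auto simp: Vidx_def)
qed

lemma tens_carrier_eq: "tens_carrier L d adm F j k = Psi ` dsum_carrier L adm j k"
proof
  show "tens_carrier L d adm F j k \<subseteq> Psi ` dsum_carrier L adm j k"
  proof
    fix s assume "s \<in> tens_carrier L d adm F j k"
    then obtain t where s: "s = tens_act L d adm F j k (eta L d adm) t"
      unfolding tens_carrier_def tens_act_def by auto
    define f where "f = (\<lambda>i. if i \<in> Ijk then actV L d adm i (eta L d adm) (\<lambda>(c,e). lam i c e t) else (\<lambda>_. 0))"
    have "f \<in> dsum_carrier L adm j k" unfolding f_def dsum_carrier_def Ijk_def using actV_Vmod by auto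
    moreover have "s = Psi f" unfolding s K1 by (rule Psi_cong) (simp add: f_def)
    ultimately show "s \<in> Psi ` dsum_carrier L adm j k" by blast
  qed
next
  show "Psi ` dsum_carrier L adm j k \<subseteq> tens_carrier L d adm F j k"
  proof
    fix s assume "s \<in> Psi ` dsum_carrier L adm j k"
    then obtain f where f: "f \<in> dsum_carrier L adm j k" "s = Psi f" by auto
    have "tens_act L d adm F j k (eta L d adm) (Psi f) = Psi (\<lambda>i. actV L d adm i (eta L d adm) (f i))"
      by (rule K2)
    also have "\<dots> = Psi f"
      by (rule Psi_cong) (use f(1) in \<open>auto simp: dsum_carrier_def Ijk_def intro!: actV_eta\<close>)
    finally have "s = actT L d adm j k (Delta L d adm F (eta L d adm)) s" using f(2) unfolding tens_act_def by simp
    moreover have "s \<in> TCmod L adm j k" using Psi_TC f(2) by simp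
    ultimately show "s \<in> tens_carrier L d adm F j k" unfolding tens_carrier_def by (rule image_eqI)
  qed
qed

lemma Psi_inj: "inj_on Psi (dsum_carrier L adm j k)"
proof (rule inj_onI)
  fix f g assume f: "f \<in> dsum_carrier L adm j k" and g: "g \<in> dsum_carrier L adm j k" and eq: "Psi f = Psi g"
  show "f = g"
  proof (intro ext)
    fix i and \<gamma> :: "'l \<times> 'l"
    obtain c e where \<gamma>: "\<gamma> = (c,e)" by (metis prod.exhaust)
    show "f i \<gamma> = g i \<gamma>"
    proof (cases "i \<in> Ijk")
      case True
      show ?thesis
      proof (cases "\<gamma> \<in> V i")
        case True2: True
        then show ?thesis using lam_Psi[OF True, of c e f] lam_Psi[OF True, of c e g] eq \<gamma> by simp
      next
        case False
        have "f i \<in> Vmod L adm i" "g i \<in> Vmod L adm i" using f g True by (auto simp: dsum_carrier_def Ijk_def)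
        then have "f i \<gamma> = 0" "g i \<gamma> = 0" using False unfolding Vmod_def by blast+
        then show ?thesis by simp
      qed
    next
      case False
      then show ?thesis using f g unfolding dsum_carrier_def Ijk_def by auto
    qed
  qed
qed

end

theorem mainTheorem9:
  fixes L :: "'l set" and u :: 'l and d :: "'l \<Rightarrow> real"
    and adm :: "'l \<Rightarrow> 'l \<Rightarrow> 'l \<Rightarrow> bool"
    and F :: "'l \<Rightarrow> 'l \<Rightarrow> 'l \<Rightarrow> 'l \<Rightarrow> 'l \<Rightarrow> 'l \<Rightarrow> complex"
    and j k :: 'l
  assumes "ufc_data L u d adm F" and "j \<in> L" and "k \<in> L"
  shows "(\<forall>i\<in>L. adm i j k \<longrightarrow>
            Wspan L adm F j k i \<subseteq> tens_carrier L d adm F j k \<and>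
            (\<forall>h. \<forall>w\<in>Wspan L adm F j k i. tens_act L d adm F j k h w \<in> Wspan L adm F j k i) \<and>
            bij_betw (phi L adm F j k i) (Vmod L adm i) (Wspan L adm F j k i) \<and>
            (\<forall>h. \<forall>x\<in>Vmod L adm i.
               phi L adm F j k i (actV L d adm i h x) = tens_act L d adm F j k h (phi L adm F j k i x)))
       \<and> (\<exists>\<Psi>. bij_betw \<Psi> (dsum_carrier L adm j k) (tens_carrier L d adm F j k) \<and>
            (\<forall>f\<in>dsum_carrier L adm j k. \<forall>g\<in>dsum_carrier L adm j k.
               \<Psi> (\<lambda>i z. f i z + g i z) = (\<lambda>z. \<Psi> f z + \<Psi> g z)) \<and>
            (\<forall>c. \<forall>f\<in>dsum_carrier L adm j k. \<Psi> (\<lambda>i z. c * f i z) = (\<lambda>z. c * \<Psi> f z)) \<and>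
            (\<forall>h. \<forall>f\<in>dsum_carrier L adm j k.
               \<Psi> (ds_act L d adm h f) = tens_act L d adm F j k h (\<Psi> f)))"
proof -
  interpret U: ufc L u d adm F j k using assms by (unfold_locales) auto
  define sg where "sg = (\<lambda>(i::'l) (x :: 'l \<times> 'l \<Rightarrow> complex) (i'::'l). if i' = i then x else (\<lambda>_. 0 :: complex))"
  have part1: "\<forall>i\<in>L. adm i j k \<longrightarrow>
            Wspan L adm F j k i \<subseteq> tens_carrier L d adm F j k \<and>
            (\<forall>h. \<forall>w\<in>Wspan L adm F j k i. tens_act L d adm F j k h w \<in> Wspan L adm F j k i) \<and>
            bij_betw (phi L adm F j k i) (Vmod L adm i) (Wspan L adm F j k i) \<and>
            (\<forall>h. \<forall>x\<in>Vmod L adm i.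
               phi L adm F j k i (actV L d adm i h x) = tens_act L d adm F j k h (phi L adm F j k i x))"
  proof (intro ballI impI conjI)
    fix i assume iL: "i \<in> L" and ijk: "adm i j k"
    have iI: "i \<in> U.Ijk" using iL ijk by (simp add: U.Ijk_def)
    have W: "Wspan L adm F j k i = range (phi L adm F j k i)" unfolding Wspan_def phi_def by auto
    have PS: "\<And>x. U.Psi (sg i x) = phi L adm F j k i x" unfolding sg_def by (rule U.Psi_single[OF iI])
    have act: "\<And>h x. tens_act L d adm F j k h (phi L adm F j k i x) = phi L adm F j k i (actV L d adm i h x)"
    proof -
      fix h x
      have "tens_act L d adm F j k h (phi L adm F j k i x) = U.Psi (\<lambda>i'. actV L d adm i' h (sg i x i'))"
        unfolding PS[symmetric] by (rule U.K2)
      also have "(\<lambda>i'. actV L d adm i' h (sg i x i')) = sg i (actV L d adm i h x)"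
        by (rule ext) (simp add: sg_def U.actV_zero)
      finally show "?thesis h x" by (simp add: PS)
    qed
    define rs where "rs = (\<lambda>c :: 'l \<times> 'l \<Rightarrow> complex. \<lambda>\<gamma>. if \<gamma> \<in> Vidx L adm i then c \<gamma> else 0)"
    have rsV: "\<And>c. rs c \<in> Vmod L adm i" unfolding rs_def Vmod_def by auto
    have rsphi: "\<And>c. phi L adm F j k i (rs c) = phi L adm F j k i c" unfolding rs_def by (rule U.phi_restr)
    have sgD: "\<And>x. x \<in> Vmod L adm i \<Longrightarrow> sg i x \<in> dsum_carrier L adm j k"
      unfolding sg_def dsum_carrier_def using iL ijk by (auto simp: Vmod_def)
    show "Wspan L adm F j k i \<subseteq> tens_carrier L d adm F j k"
    proof
      fix w assume "w \<in> Wspan L adm F j k i"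
      then obtain c where "w = phi L adm F j k i c" unfolding W by auto
      then have "w = U.Psi (sg i (rs c))" by (simp add: PS rsphi)
      then show "w \<in> tens_carrier L d adm F j k" unfolding U.tens_carrier_eq using sgD[OF rsV] by blast
    qed
    show "\<forall>h. \<forall>w\<in>Wspan L adm F j k i. tens_act L d adm F j k h w \<in> Wspan L adm F j k i"
      unfolding W using act by auto
    show "bij_betw (phi L adm F j k i) (Vmod L adm i) (Wspan L adm F j k i)"
      unfolding bij_betw_def
    proof
      show "inj_on (phi L adm F j k i) (Vmod L adm i)"
      proof (rule inj_onI)
        fix x y assume x: "x \<in> Vmod L adm i" and y: "y \<in> Vmod L adm i"
          and e: "phi L adm F j k i x = phi L adm F j k i y"
        then have "U.Psi (sg i x) = U.Psi (sg i y)" by (simp add: PS)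
        then have "sg i x = sg i y" using U.Psi_inj sgD[OF x] sgD[OF y] by (meson inj_onD)
        then have "sg i x i = sg i y i" by simp
        then show "x = y" by (simp add: sg_def)
      qed
      show "phi L adm F j k i ` Vmod L adm i = Wspan L adm F j k i"
      proof
        show "phi L adm F j k i ` Vmod L adm i \<subseteq> Wspan L adm F j k i" unfolding W by auto
        show "Wspan L adm F j k i \<subseteq> phi L adm F j k i ` Vmod L adm i"
        proof
          fix w assume "w \<in> Wspan L adm F j k i"
          then obtain c where "w = phi L adm F j k i c" unfolding W by auto
          then have "w = phi L adm F j k i (rs c)" by (simp add: rsphi)
          then show "w \<in> phi L adm F j k i ` Vmod L adm i" using rsV by blast
        qed
      qed
    qed
    show "\<forall>h. \<forall>x\<in>Vmod L adm i.
               phi L adm F j k i (actV L d adm i h x) = tens_act L d adm F j k h (phi L adm F j k i x)"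
      using act by simp
  qed
  have part2: "bij_betw U.Psi (dsum_carrier L adm j k) (tens_carrier L d adm F j k) \<and>
            (\<forall>f\<in>dsum_carrier L adm j k. \<forall>g\<in>dsum_carrier L adm j k.
               U.Psi (\<lambda>i z. f i z + g i z) = (\<lambda>z. U.Psi f z + U.Psi g z)) \<and>
            (\<forall>c. \<forall>f\<in>dsum_carrier L adm j k. U.Psi (\<lambda>i z. c * f i z) = (\<lambda>z. c * U.Psi f z)) \<and>
            (\<forall>h. \<forall>f\<in>dsum_carrier L adm j k.
               U.Psi (ds_act L d adm h f) = tens_act L d adm F j k h (U.Psi f))"
    using U.Psi_inj U.tens_carrier_eq U.Psi_add U.Psi_scal U.K2
    by (simp add: bij_betw_def ds_act_def)
  show ?thesis using part1 part2 by blast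
qed

end
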